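(* Let $R=E[\eta(X)\eta(X)^\top]$ and $m=\sup_{x\in[0,1]^D}|\eta(x)|_2^2$ for the piecewise Legendre basis $\eta$ of the context, and assume $Q=0$, or $Q\in\mathbb{N}$ satisfies $$2\binom{D+Q}{D}e^{2Q}\le\frac{f_*}{\varpi(1/N)}.$$ Then $\lambda_{\min}(R)\ge f_*/2$, $\lambda_{\max}(R)\le\frac32f^*$, and $m\le N^De^{2Q}\binom{D+Q}{D}$.
   Context: $X$ is an $\mathbb{R}^D$-valued random variable with Lebesgue density $f\mathbf 1_{[0,1]^D}$, where $f$ is continuous and strictly positive on $[0,1]^D$. Let $f_*=\inf_{[0,1]^D}f$, $f^*=\sup_{[0,1]^D}f$, $\varpi(h)=\sup\{|f(x)-f(z)|:x,z\in[0,1]^D,|x-z|_\infty\le h\}$ (if $\varpi(1/N)=0$ the displayed condition is considered satisfied). For $N\in\mathbb{N}$ and $\mathbf i\in\{0,\dots,N-1\}^D$ let $C_{\mathbf i}=\prod_d(i_d/N,(i_d+1)/N]$. $\mathcal{L}_q$ is the Legendre polynomial of degree $q$ normalized by $\mathcal{L}_q(1)=1$. For $\mathbf j\in\mathbb{N}_0^D$, $p_{\mathbf j,\mathbf i}(x)=N^{D/2}\prod_{d=1}^D\sqrt{2j_d+1}\,\mathcal{L}_{j_d}(2(Nx_d-i_d)-1)$. For fixed $Q\in\mathbb{N}_0$, the basis consists of the $K=N^D\binom{D+Q}{D}$ functions $\eta_{\mathbf i,\mathbf j}=p_{\mathbf j,\mathbf i}\mathbf 1_{C_{\mathbf i}}$,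 $\mathbf i\in\{0,\dots,N-1\}^D$, $|\mathbf j|_1\le Q$, arranged in some fixed order into the vector $\eta$. *)

theory Defs
  imports "HOL-Analysis.Analysis"
begin

text \<open>Legendre polynomials normalised by L_q(1) = 1, via Bonnet's recurrence
  L_0 = 1, L_1 = t, (q+2) L_{q+2} = (2q+3) t L_{q+1} - (q+1) L_q.\<close>
fun legendre :: "nat \<Rightarrow> real \<Rightarrow> real" where
  "legendre 0 t = 1"
| "legendre (Suc 0) t = t"
| "legendre (Suc (Suc q)) t =
     ((2 * real q + 3) * t * legendre (Suc q) t - (real q + 1) * legendre q t) / (real q + 2)"

text \<open>The unit cube [0,1]^D, D = CARD('n).\<close>
abbreviation unit_cube :: "(real^'n) set" where
  "unit_cube \<equiv> cbox 0 1"

definition cell_idx :: "nat \<Rightarrow> ('n::finite \<Rightarrow> nat) set" where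
  "cell_idx N = {i. \<forall>d. i d < N}"

definition deg_idx :: "nat \<Rightarrow> ('n::finite \<Rightarrow> nat) set" where
  "deg_idx Q = {j. (\<Sum>d\<in>UNIV. j d) \<le> Q}"

definition basis_idx :: "nat \<Rightarrow> nat \<Rightarrow> (('n::finite \<Rightarrow> nat) \<times> ('n \<Rightarrow> nat)) set" where
  "basis_idx N Q = cell_idx N \<times> deg_idx Q"

definition cell :: "nat \<Rightarrow> ('n::finite \<Rightarrow> nat) \<Rightarrow> (real^'n) set" where
  "cell N i = {x. \<forall>d. real (i d) / real N < x$d \<and> x$d \<le> (real (i d) + 1) / real N}"

definition pleg :: "nat \<Rightarrow> ('n::finite \<Rightarrow> nat) \<Rightarrow> ('n \<Rightarrow> nat) \<Rightarrow> real^'n \<Rightarrow> real" where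
  "pleg N j i x = sqrt (real N) ^ CARD('n) *
     (\<Prod>d\<in>UNIV. sqrt (2 * real (j d) + 1) *
                  legendre (j d) (2 * (real N * x$d - real (i d)) - 1))"

definition eta :: "nat \<Rightarrow> ('n::finite \<Rightarrow> nat) \<times> ('n \<Rightarrow> nat) \<Rightarrow> real^'n \<Rightarrow> real" where
  "eta N ij x = pleg N (snd ij) (fst ij) x * indicator (cell N (fst ij)) x"

definition modcont :: "(real^'n::finite \<Rightarrow> real) \<Rightarrow> real \<Rightarrow> real" where
  "modcont f h = Sup {\<bar>f x - f z\<bar> | x z. x \<in> unit_cube \<and> z \<in> unit_cube \<and> infnorm (x - z) \<le> h}"

definition eigenvalues_on :: "'b set \<Rightarrow> ('b \<Rightarrow> 'b \<Rightarrow> real) \<Rightarrow> real set" where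
  "eigenvalues_on B M = {lam. \<exists>v. (\<exists>a\<in>B. v a \<noteq> 0) \<and>
       (\<forall>a\<in>B. (\<Sum>b\<in>B. M a b * v b) = lam * v a)}"

end

theory Submission
  imports Defs "HOL-Computational_Algebra.Polynomial"
begin


fun lp :: "nat \<Rightarrow> real poly" where
  "lp 0 = 1"
| "lp (Suc 0) = [:0,1:]"
| "lp (Suc (Suc q)) = smult (1 / (real q + 2))
     (smult (2 * real q + 3) ([:0,1:] * lp (Suc q)) - smult (real q + 1) (lp q))"

lemma poly_lp: "poly (lp n) t = legendre n t"
  by (induction n rule: lp.induct) (auto simp: field_simps)

lemma poly_lp_SS: "poly (lp (Suc (Suc q))) t =
   ((2 * real q + 3) * t * poly (lp (Suc q)) t - (real q + 1) * poly (lp q) t) / (real q + 2)"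
  by (simp add: field_simps)

lemma pderiv_lp_SS: "poly (pderiv (lp (Suc (Suc q)))) t =
   ((2 * real q + 3) * (poly (lp (Suc q)) t + t * poly (pderiv (lp (Suc q))) t)
      - (real q + 1) * poly (pderiv (lp q)) t) / (real q + 2)"
  by (simp add: pderiv_smult pderiv_diff pderiv_mult pderiv_pCons field_simps)

declare lp.simps(3)[simp del]

lemma lp_ids: "poly (pderiv (lp (Suc n))) t = t * poly (pderiv (lp n)) t + (real n + 1) * poly (lp n) t
  \<and> t * poly (pderiv (lp (Suc n))) t - poly (pderiv (lp n)) t = (real n + 1) * poly (lp (Suc n)) t
  \<and> (t^2 - 1) * poly (pderiv (lp (Suc n))) t = (real n + 1) * (t * poly (lp (Suc n)) t - poly (lp n) t)"
proof (induction n)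
  case 0
  then show ?case by (simp add: pderiv_pCons power2_eq_square)
next
  case (Suc n)
  define a where "a = poly (lp n) t"
  define b where "b = poly (lp (Suc n)) t"
  define a' where "a' = poly (pderiv (lp n)) t"
  define b' where "b' = poly (pderiv (lp (Suc n))) t"
  have c: "poly (lp (Suc (Suc n))) t = ((2 * real n + 3) * t * b - (real n + 1) * a) / (real n + 2)"
    unfolding a_def b_def by (rule poly_lp_SS)
  have c': "poly (pderiv (lp (Suc (Suc n)))) t = ((2 * real n + 3) * (b + t * b') - (real n + 1) * a') / (real n + 2)"
    unfolding a_def b_def a'_def b'_def by (rule pderiv_lp_SS)
  have IH1: "b' = t * a' + (real n + 1) * a" and IH2: "t * b' - a' = (real n + 1) * b"
    and IH3: "(t^2 - 1) * b' = (real n + 1) * (t * b - a)"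
    using Suc.IH unfolding a_def b_def a'_def b'_def by auto
  have h1: "(2 * real n + 3) * (b + t * b') - (real n + 1) * a' = (real n + 2) * (t * b' + (real n + 2) * b)"
    using IH2 by (simp add: algebra_simps)
  have e1: "poly (pderiv (lp (Suc (Suc n)))) t = t * b' + (real (Suc n) + 1) * b"
    unfolding c' h1 by simp
  have e2: "t * poly (pderiv (lp (Suc (Suc n)))) t - b' = (real (Suc n) + 1) * poly (lp (Suc (Suc n))) t"
    unfolding e1 c using IH3 by (simp add: field_simps power2_eq_square) algebra
  have e3: "(t^2 - 1) * poly (pderiv (lp (Suc (Suc n)))) t = (real (Suc n) + 1) * (t * poly (lp (Suc (Suc n))) t - b)"
    unfolding e1 c using IH3 by (simp add: field_simps power2_eq_square) algebra
  show ?case using e1 e2 e3 unfolding b_def b'_def by simp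
qed

definition W :: "real poly" where "W = [:1,0,-1:]"

lemma poly_W: "poly W t = 1 - t^2"
  by (simp add: W_def power2_eq_square)

lemma lp_A_poly: "W * pderiv (lp (Suc n)) = smult (-(real n + 1)) ([:0,1:] * lp (Suc n) - lp n)"
proof -
  have "poly (W * pderiv (lp (Suc n))) t = poly (smult (-(real n + 1)) ([:0,1:] * lp (Suc n) - lp n)) t" for t
  proof -
    have h: "(t^2 - 1) * poly (pderiv (lp (Suc n))) t = (real n + 1) * (t * poly (lp (Suc n)) t - poly (lp n) t)"
      using lp_ids[of n t] by blast
    show ?thesis using h by (simp add: poly_W) algebra
  qed
  then show ?thesis by (intro poly_ext) auto
qed

lemma lp_ode_poly: "pderiv (W * pderiv (lp n)) = smult (-(real n * (real n + 1))) (lp n)"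
proof (cases n)
  case 0
  then show ?thesis by simp
next
  case (Suc m)
  have d: "pderiv (W * pderiv (lp (Suc m))) = smult (-(real m + 1)) (lp (Suc m) + [:0,1:] * pderiv (lp (Suc m)) - pderiv (lp m))"
    unfolding lp_A_poly by (simp add: pderiv_smult pderiv_diff pderiv_mult pderiv_pCons pderiv_add)
  have "poly (pderiv (W * pderiv (lp (Suc m)))) t = poly (smult (-(real (Suc m) * (real (Suc m) + 1))) (lp (Suc m))) t" for t
  proof -
    have h: "t * poly (pderiv (lp (Suc m))) t - poly (pderiv (lp m)) t = (real m + 1) * poly (lp (Suc m)) t"
      using lp_ids[of m t] by blast
    show ?thesis unfolding d using h by simp algebra
  qed
  then show ?thesis using Suc by (intro poly_ext) auto
qed

definition I :: "real poly \<Rightarrow> real" where "I p = integral {-1..1} (poly p)"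

lemma I_add: "I (p + q) = I p + I q"
  unfolding I_def poly_add by (intro integral_add) (auto intro!: integrable_continuous_interval continuous_on_poly continuous_on_id)

lemma I_smult: "I (smult c p) = c * I p"
proof -
  have "poly (smult c p) = (\<lambda>x. c * poly p x)" by (rule ext) simp
  then show ?thesis unfolding I_def by simp
qed

lemma I_diff: "I (p - q) = I p - I q"
  using I_add[of "p - q" q] by simp

lemma I_deriv: "I (pderiv p) = poly p 1 - poly p (-1)"
proof -
  have "(poly (pderiv p) has_integral (poly p 1 - poly p (-1))) {-1..1}"
    by (rule fundamental_theorem_of_calculus)
       (auto intro!: has_real_derivative_iff_has_vector_derivative[THEN iffD1] DERIV_subset[OF poly_DERIV])
  then show ?thesis unfolding I_def by (rule integral_unique)
qed

lemma lp_orth_aux: "I (W * pderiv (lp n) * pderiv (lp m)) = real n * (real n + 1) * I (lp n * lp m)"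
proof -
  have "pderiv (W * pderiv (lp n) * lp m) = smult (-(real n * (real n + 1))) (lp n * lp m) + W * pderiv (lp n) * pderiv (lp m)"
    by (subst pderiv_mult) (simp add: lp_ode_poly algebra_simps)
  then have "I (pderiv (W * pderiv (lp n) * lp m)) = -(real n * (real n + 1)) * I (lp n * lp m) + I (W * pderiv (lp n) * pderiv (lp m))"
    by (simp add: I_add I_smult del: smult_minus_left mult_smult_left)
  moreover have "I (pderiv (W * pderiv (lp n) * lp m)) = 0" by (simp add: I_deriv poly_W)
  ultimately show ?thesis by simp
qed

lemma lp_orth: "n \<noteq> m \<Longrightarrow> I (lp n * lp m) = 0"
proof -
  assume nm: "n \<noteq> m"
  have c1: "W * pderiv (lp n) * pderiv (lp m) = W * pderiv (lp m) * pderiv (lp n)" by (simp add: ac_simps)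
  have c2: "lp n * lp m = lp m * lp n" by (simp add: ac_simps)
  have "real n * (real n + 1) * I (lp n * lp m) = real m * (real m + 1) * I (lp n * lp m)"
    using lp_orth_aux[of n m] lp_orth_aux[of m n] unfolding c1 c2 by (metis (no_types))
  moreover have "real n * (real n + 1) \<noteq> real m * (real m + 1)"
  proof
    assume "real n * (real n + 1) = real m * (real m + 1)"
    then have "n * (n + 1) = m * (m + 1)" by (metis of_nat_1 of_nat_add of_nat_eq_iff of_nat_mult)
    moreover have "n < m \<Longrightarrow> n * (n + 1) < m * (m + 1)" by (intro mult_strict_mono) auto
    moreover have "m < n \<Longrightarrow> m * (m + 1) < n * (n + 1)" by (intro mult_strict_mono) auto
    ultimately show False using nm by (metis less_irrefl nat_neq_iff)
  qed
  ultimately show ?thesis by simp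
qed


lemma lp_rec_poly: "smult (real q + 2) (lp (Suc (Suc q))) = smult (2 * real q + 3) ([:0,1:] * lp (Suc q)) - smult (real q + 1) (lp q)"
proof -
  have "(real q + 2) * (1 / (real q + 2)) = 1" by simp
  then show ?thesis unfolding lp.simps(3) smult_smult by simp
qed

lemma I_one: "I 1 = 2"
proof -
  have "I (pderiv [:0,1:]) = 2" by (simp add: I_deriv)
  then show ?thesis by (simp add: pderiv_pCons) (metis one_pCons)
qed

lemma I_XX: "I ([:0,1:] * [:0,1:]) = 2/3"
proof -
  have "[:0,1:] * [:0,1:] = pderiv [:0,0,0,1/3::real:]"
    by (simp add: pderiv_pCons)
  then show ?thesis by (simp add: I_deriv)
qed

lemma lp_norm_step: "(2 * real q + 5) * I (lp (Suc (Suc q)) * lp (Suc (Suc q))) = (2 * real q + 3) * I (lp (Suc q) * lp (Suc q))"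
proof -
  have e1: "(real q + 2) * I (lp (Suc (Suc q)) * lp (Suc (Suc q))) = (2 * real q + 3) * I ([:0,1:] * lp (Suc q) * lp (Suc (Suc q))) - (real q + 1) * I (lp q * lp (Suc (Suc q)))"
  proof -
    have "smult (real q + 2) (lp (Suc (Suc q))) * lp (Suc (Suc q)) = smult (2 * real q + 3) ([:0,1:] * lp (Suc q) * lp (Suc (Suc q))) - smult (real q + 1) (lp q * lp (Suc (Suc q)))"
      unfolding lp_rec_poly by (simp add: algebra_simps)
    then have "I (smult (real q + 2) (lp (Suc (Suc q))) * lp (Suc (Suc q))) = I (smult (2 * real q + 3) ([:0,1:] * lp (Suc q) * lp (Suc (Suc q))) - smult (real q + 1) (lp q * lp (Suc (Suc q))))"
      by simp
    then show ?thesis by (simp only: I_diff I_smult mult_smult_left)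
  qed
  have e2: "(real (Suc q) + 2) * I (lp (Suc (Suc (Suc q))) * lp (Suc q)) = (2 * real (Suc q) + 3) * I ([:0,1:] * lp (Suc (Suc q)) * lp (Suc q)) - (real (Suc q) + 1) * I (lp (Suc q) * lp (Suc q))"
  proof -
    have "smult (real (Suc q) + 2) (lp (Suc (Suc (Suc q)))) * lp (Suc q) = smult (2 * real (Suc q) + 3) ([:0,1:] * lp (Suc (Suc q)) * lp (Suc q)) - smult (real (Suc q) + 1) (lp (Suc q) * lp (Suc q))"
      unfolding lp_rec_poly by (simp add: algebra_simps)
    then have "I (smult (real (Suc q) + 2) (lp (Suc (Suc (Suc q)))) * lp (Suc q)) = I (smult (2 * real (Suc q) + 3) ([:0,1:] * lp (Suc (Suc q)) * lp (Suc q)) - smult (real (Suc q) + 1) (lp (Suc q) * lp (Suc q)))"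
      by simp
    then show ?thesis by (simp only: I_diff I_smult mult_smult_left)
  qed
  have o1: "I (lp q * lp (Suc (Suc q))) = 0" by (rule lp_orth) simp
  have o2: "I (lp (Suc (Suc (Suc q))) * lp (Suc q)) = 0" by (rule lp_orth) simp
  have c: "[:0,1:] * lp (Suc (Suc q)) * lp (Suc q) = [:0,1:] * lp (Suc q) * lp (Suc (Suc q))" by (simp add: ac_simps)
  from e1 e2 o1 o2 c have "(real q + 2) * ((2 * real q + 5) * I (lp (Suc (Suc q)) * lp (Suc (Suc q)))) = (real q + 2) * ((2 * real q + 3) * I (lp (Suc q) * lp (Suc q)))"
    by (simp add: algebra_simps)
  then show ?thesis by simp
qed

lemma lp_norm: "I (lp n * lp n) = 2 / (2 * real n + 1)"
proof (induction n rule: lp.induct)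
  case 1 then show ?case by (simp add: I_one)
next
  case 2 then show ?case using I_XX by simp
next
  case (3 q)
  have "(2 * real q + 5) * I (lp (Suc (Suc q)) * lp (Suc (Suc q))) = (2 * real q + 3) * (2 / (2 * real q + 3))"
  proof -
    have ih: "I (lp (Suc q) * lp (Suc q)) = 2 / (2 * real (Suc q) + 1)" using 3 by blast
    show ?thesis using lp_norm_step[of q] unfolding ih by (simp add: algebra_simps)
  qed
  moreover have "(2 * real q + 3) * (2 / (2 * real q + 3)) = 2"
  proof -
    have h: "2 * real q + 3 > 0" by simp
    then show ?thesis by (simp add: field_simps)
  qed
  ultimately have "(2 * real q + 5) * I (lp (Suc (Suc q)) * lp (Suc (Suc q))) = 2"
    by simp
  then show ?case by (simp add: field_simps)
qed

lemma lp_at_1: "poly (lp n) 1 = 1 \<and> poly (lp n) (-1) = (-1)^n"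
  by (induction n rule: lp.induct) (auto simp: poly_lp_SS field_simps)

lemma lp_bound: assumes "\<bar>t\<bar> \<le> 1" shows "(poly (lp n) t)^2 \<le> 1"
proof (cases n)
  case 0 then show ?thesis by simp
next
  case (Suc m)
  define k where "k = real n * (real n + 1)"
  have kpos: "k > 0" unfolding k_def using Suc by simp
  define F where "F = lp n * lp n + smult (1/k) (W * pderiv (lp n) * pderiv (lp n))"
  have ode: "- 2 * s * poly (pderiv (lp n)) s + (1 - s^2) * poly (pderiv (pderiv (lp n))) s = - k * poly (lp n) s" for s
  proof -
    have "poly (pderiv (W * pderiv (lp n))) s = poly (smult (-(real n * (real n + 1))) (lp n)) s"
      by (simp only: lp_ode_poly)
    moreover have "pderiv W = [:0,-2:]" by (simp add: W_def pderiv_pCons)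
    ultimately show ?thesis by (simp add: pderiv_mult poly_W k_def algebra_simps)
  qed
  have dF: "poly (pderiv F) s = 2 * s * (poly (pderiv (lp n)) s)^2 / k" for s
  proof -
    have "pderiv W = [:0,-2:]" by (simp add: W_def pderiv_pCons)
    then have "poly (pderiv F) s = 2 * poly (lp n) s * poly (pderiv (lp n)) s + (1/k) * (- 2 * s * poly (pderiv (lp n)) s * poly (pderiv (lp n)) s + 2 * (1 - s^2) * poly (pderiv (pderiv (lp n))) s * poly (pderiv (lp n)) s)"
      unfolding F_def by (simp add: pderiv_mult pderiv_add pderiv_smult poly_W algebra_simps)
    also have "\<dots> = 2 * poly (lp n) s * poly (pderiv (lp n)) s + (1/k) * (poly (pderiv (lp n)) s * (2 * s * poly (pderiv (lp n)) s + 2 * (- 2 * s * poly (pderiv (lp n)) s + (1 - s^2) * poly (pderiv (pderiv (lp n))) s)))"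
      by (simp add: algebra_simps)
    also have "\<dots> = 2 * s * (poly (pderiv (lp n)) s)^2 / k"
      unfolding ode using kpos by (simp add: field_simps power2_eq_square)
    finally show ?thesis .
  qed
  have Fend: "poly F 1 = 1" "poly F (-1) = 1"
    using lp_at_1[of n] by (simp_all add: F_def poly_W)
  have der: "DERIV (poly F) x :> 2 * x * (poly (pderiv (lp n)) x)^2 / k" for x
    using poly_DERIV[of F x] unfolding dF .
  have "poly F t \<le> 1"
  proof (cases "t \<ge> 0")
    case True
    have "poly F t \<le> poly F 1"
      by (rule DERIV_nonneg_imp_nondecreasing[of t 1 "poly F"])
         (use assms True kpos der in \<open>auto intro!: exI[of _ "2 * _ * (poly (pderiv (lp n)) _)^2 / k"]\<close>)
    then show ?thesis using Fend by simp
  next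
    case False
    have "poly F (-1) \<ge> poly F t"
      by (rule DERIV_nonpos_imp_nonincreasing[of "-1" t "poly F"])
         (use assms False kpos der in \<open>auto intro!: exI[of _ "2 * _ * (poly (pderiv (lp n)) _)^2 / k"] simp: mult_nonpos_nonneg divide_nonpos_pos\<close>)
    then show ?thesis using Fend by simp
  qed
  moreover have "(poly (lp n) t)^2 \<le> poly F t"
  proof -
    have "0 \<le> 1 - t^2" using assms by (simp add: abs_square_le_1)
    then have "0 \<le> (1/k) * ((1 - t^2) * poly (pderiv (lp n)) t * poly (pderiv (lp n)) t)"
      using kpos by (simp add: mult.assoc)
    then show ?thesis by (simp add: F_def poly_W power2_eq_square)
  qed
  ultimately show ?thesis by simp
qed


definition phi :: "nat \<Rightarrow> nat \<Rightarrow> nat \<Rightarrow> real \<Rightarrow> real" where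
  "phi N c j y = sqrt (real N) * sqrt (2 * real j + 1) * legendre j (2 * (real N * y - real c) - 1)"

lemma continuous_on_legendre: "continuous_on S (\<lambda>y. legendre j (g y))" if "continuous_on S g"
  using continuous_on_poly[OF that, of "lp j"] by (simp add: poly_lp)

lemma phi_orth:
  assumes N: "N \<ge> 1"
  shows "((\<lambda>y. phi N c j y * phi N c k y) has_integral (if j = k then 1 else 0))
           {real c / real N .. (real c + 1) / real N}"
proof -
  define g where "g = poly (lp j * lp k)"
  have gI: "(g has_integral I (lp j * lp k)) (cbox (-1) 1)"
    unfolding g_def I_def cbox_interval
    by (intro integrable_integral integrable_continuous_interval continuous_on_poly continuous_on_id)
  have pos: "0 < 2 * real N" using N by simp
  have h0: "((\<lambda>x. g (2 * real N * x + - (2 * real c + 1))) has_integral inverse ((2 * real N) ^ DIM(real)) * I (lp j * lp k))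
        {inverse (2 * real N) * (- 1 - - (2 * real c + 1)) .. inverse (2 * real N) * (1 - - (2 * real c + 1))}"
    using has_integral_affinity'[OF gI pos, of "-(2 * real c + 1)"]
    apply (simp only: cbox_interval real_scaleR_def) done
  have e1: "inverse (2 * real N) * (- 1 - - (2 * real c + 1)) = real c / real N" using N by (simp add: field_simps)
  have e2: "inverse (2 * real N) * (1 - - (2 * real c + 1)) = (real c + 1) / real N" using N by (simp add: field_simps)
  have e3: "inverse ((2 * real N) ^ DIM(real)) * I (lp j * lp k) = I (lp j * lp k) / (2 * real N)" by (simp add: field_simps)
  have h: "((\<lambda>x. g (2 * real N * x + - (2 * real c + 1))) has_integral I (lp j * lp k) / (2 * real N))
        {real c / real N .. (real c + 1) / real N}"
    using h0 unfolding e1 e2 e3 by simp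
  define cst where "cst = real N * sqrt (2 * real j + 1) * sqrt (2 * real k + 1)"
  have fe: "(\<lambda>y. phi N c j y * phi N c k y) = (\<lambda>y. cst * g (2 * real N * y + - (2 * real c + 1)))"
  proof (rule ext)
    fix y
    define A where "A = 2 * (real N * y - real c) - 1"
    have "phi N c j y * phi N c k y = (sqrt (real N) * sqrt (real N)) * sqrt (2 * real j + 1) * sqrt (2 * real k + 1) * (legendre j A * legendre k A)"
      unfolding phi_def A_def by (simp only: mult_ac)
    also have "\<dots> = cst * g (2 * real N * y + - (2 * real c + 1))"
      unfolding cst_def g_def by (simp add: poly_lp A_def algebra_simps)
    finally show "phi N c j y * phi N c k y = cst * g (2 * real N * y + - (2 * real c + 1))" .
  qed
  have val: "cst * (I (lp j * lp k) / (2 * real N)) = (if j = k then 1 else 0)"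
  proof (cases "j = k")
    case True
    have s: "sqrt (2 * real k + 1) * sqrt (2 * real k + 1) = 2 * real k + 1" by simp
    have p: "real N > 0" "2 * real k + 1 > 0" using N by auto
    have q: "real N * 2 + real N * (real k * 4) > 0" using p(1) by (intro add_pos_nonneg) auto
    have "cst * (I (lp j * lp k) / (2 * real N)) = (real N * (2 * real k + 1)) * ((2 / (2 * real k + 1)) / (2 * real N))"
      unfolding cst_def True lp_norm mult.assoc s by simp
    also have "\<dots> = 1" using p q by (simp add: field_simps)
    finally have "cst * (I (lp j * lp k) / (2 * real N)) = 1" .
    moreover have "(if j = k then 1 else 0) = (1::real)" using True by simp
    ultimately show ?thesis by linarith
  next
    case False
    then show ?thesis by (simp add: lp_orth)
  qed
  show ?thesis unfolding fe val[symmetric] by (rule has_integral_mult_right[OF h])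
qed


lemma lborel_prod_euclid:
  fixes G :: "'a::euclidean_space \<Rightarrow> real \<Rightarrow> real"
  assumes int: "\<And>b. b \<in> Basis \<Longrightarrow> integrable lborel (G b)"
  shows "integrable lborel (\<lambda>x::'a. \<Prod>b\<in>Basis. G b (x \<bullet> b))
    \<and> integral\<^sup>L lborel (\<lambda>x::'a. \<Prod>b\<in>Basis. G b (x \<bullet> b)) = (\<Prod>b\<in>Basis. integral\<^sup>L lborel (G b))"
proof -
  interpret finite_product_sigma_finite "\<lambda>_. lborel" "Basis :: 'a set" by standard simp
  define T where "T = (\<lambda>f. \<Sum>b\<in>(Basis::'a set). f b *\<^sub>R b)"
  have Tm: "T \<in> measurable (\<Pi>\<^sub>M b\<in>(Basis::'a set). lborel) borel"
    unfolding T_def by measurable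
  have Gm: "G b \<in> borel_measurable borel" if "b \<in> Basis" for b
    using borel_measurable_integrable[OF int[OF that]] by simp
  have Fm: "(\<lambda>x::'a. \<Prod>b\<in>Basis. G b (x \<bullet> b)) \<in> borel_measurable borel"
    by (intro borel_measurable_prod measurable_compose[OF _ Gm] borel_measurable_inner) auto
  have Tb: "T f \<bullet> b = f b" if "b \<in> Basis" for f b
    using that unfolding T_def by (simp add: inner_sum_left inner_Basis if_distrib sum.delta cong: if_cong)
  have comp: "(\<lambda>f. \<Prod>b\<in>Basis. G b (T f \<bullet> b)) = (\<lambda>f. \<Prod>b\<in>Basis. G b (f b))"
    by (intro ext prod.cong) (simp_all add: Tb)
  have L: "lborel = distr (\<Pi>\<^sub>M b\<in>(Basis::'a set). lborel) borel T"
    unfolding T_def by (rule lborel_eq)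
  have i1: "integrable (\<Pi>\<^sub>M b\<in>(Basis::'a set). lborel) (\<lambda>f. \<Prod>b\<in>Basis. G b (f b))"
    by (rule product_integrable_prod) (auto intro: int)
  have "integrable lborel (\<lambda>x::'a. \<Prod>b\<in>Basis. G b (x \<bullet> b))"
    unfolding L by (subst integrable_distr_eq[OF Tm Fm]) (simp add: comp i1)
  moreover have "integral\<^sup>L lborel (\<lambda>x::'a. \<Prod>b\<in>Basis. G b (x \<bullet> b)) = (\<Prod>b\<in>Basis. integral\<^sup>L lborel (G b))"
    unfolding L by (subst integral_distr[OF Tm Fm]) (simp add: comp product_integral_prod int)
  ultimately show ?thesis by blast
qed


lemma Basis_vec_axis: "(Basis :: (real^'n) set) = (\<lambda>d. axis d 1) ` UNIV"
  by (auto simp: Basis_vec_def)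

lemma prod_Basis_vec:
  fixes H :: "real^'n \<Rightarrow> real"
  shows "(\<Prod>b\<in>(Basis :: (real^'n) set). H b) = (\<Prod>d\<in>UNIV. H (axis d 1))"
proof -
  have "inj (\<lambda>d::'n. axis d (1::real))" by (auto simp: inj_on_def axis_eq_axis)
  then show ?thesis unfolding Basis_vec_axis by (simp add: prod.reindex)
qed

lemma lborel_prod_vec:
  fixes g :: "'n::finite \<Rightarrow> real \<Rightarrow> real"
  assumes int: "\<And>d. integrable lborel (g d)"
  shows "integrable lborel (\<lambda>x::real^'n. \<Prod>d\<in>UNIV. g d (x $ d))
    \<and> integral\<^sup>L lborel (\<lambda>x::real^'n. \<Prod>d\<in>UNIV. g d (x $ d)) = (\<Prod>d\<in>UNIV. integral\<^sup>L lborel (g d))"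
proof -
  define G where "G b = g (SOME d. axis d 1 = b)" for b :: "real^'n"
  have Ga: "G (axis d 1) = g d" for d
  proof -
    have "(SOME d'. axis d' (1::real) = axis d 1) = d"
      by (rule some_equality) (auto simp: axis_eq_axis)
    then show ?thesis unfolding G_def by simp
  qed
  have intG: "integrable lborel (G b)" if "b \<in> Basis" for b
    using that Ga int unfolding Basis_vec_axis by auto
  have e1: "(\<lambda>x::real^'n. \<Prod>b\<in>Basis. G b (x \<bullet> b)) = (\<lambda>x. \<Prod>d\<in>UNIV. g d (x $ d))"
    by (rule ext) (simp add: prod_Basis_vec Ga inner_axis)
  have e2: "(\<Prod>b\<in>(Basis :: (real^'n) set). integral\<^sup>L lborel (G b)) = (\<Prod>d\<in>UNIV. integral\<^sup>L lborel (g d))"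
    by (simp add: prod_Basis_vec Ga)
  have "integrable lborel (\<lambda>x::real^'n. \<Prod>b\<in>Basis. G b (x \<bullet> b)) \<and> integral\<^sup>L lborel (\<lambda>x::real^'n. \<Prod>b\<in>Basis. G b (x \<bullet> b)) = (\<Prod>b\<in>Basis. integral\<^sup>L lborel (G b))"
    by (rule lborel_prod_euclid) (rule intG)
  then show ?thesis unfolding e1 e2 .
qed

lemma box_prod_has_integral:
  fixes lo hi :: "real^'n::finite" and h :: "'n \<Rightarrow> real \<Rightarrow> real"
  assumes cont: "\<And>d. continuous_on {lo$d..hi$d} (h d)"
  shows "((\<lambda>x. \<Prod>d\<in>UNIV. h d (x$d)) has_integral (\<Prod>d\<in>UNIV. integral {lo$d..hi$d} (h d))) (cbox lo hi)"
proof -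
  define g where "g d y = indicator {lo$d..hi$d} y * h d y" for d y
  have intg: "integrable lborel (g d)" for d
    using borel_integrable_compact[OF compact_Icc cont[of d]] unfolding g_def by simp
  have g1: "integral\<^sup>L lborel (g d) = integral {lo$d..hi$d} (h d)" for d
  proof -
    have "(g d has_integral integral\<^sup>L lborel (g d)) UNIV" by (rule has_integral_integral_real[OF intg])
    moreover have "g d = (\<lambda>y. if y \<in> {lo$d..hi$d} then h d y else 0)"
      by (auto simp: g_def indicator_def)
    moreover have "(h d has_integral integral {lo$d..hi$d} (h d)) {lo$d..hi$d}"
      by (intro integrable_integral integrable_continuous_interval cont)
    ultimately show ?thesis
      using has_integral_restrict_UNIV has_integral_unique by metis
  qed
  have P: "integrable lborel (\<lambda>x::real^'n. \<Prod>d\<in>UNIV. g d (x $ d))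
    \<and> integral\<^sup>L lborel (\<lambda>x::real^'n. \<Prod>d\<in>UNIV. g d (x $ d)) = (\<Prod>d\<in>UNIV. integral\<^sup>L lborel (g d))"
    by (rule lborel_prod_vec[OF intg])
  have F: "(\<lambda>x::real^'n. \<Prod>d\<in>UNIV. g d (x $ d)) = (\<lambda>x. if x \<in> cbox lo hi then \<Prod>d\<in>UNIV. h d (x$d) else 0)"
  proof (rule ext)
    fix x :: "real^'n"
    show "(\<Prod>d\<in>UNIV. g d (x $ d)) = (if x \<in> cbox lo hi then \<Prod>d\<in>UNIV. h d (x$d) else 0)"
    proof (cases "x \<in> cbox lo hi")
      case True
      then show ?thesis by (auto simp: g_def mem_box_cart indicator_def intro!: prod.cong)
    next
      case False
      then obtain d where "\<not> (lo$d \<le> x$d \<and> x$d \<le> hi$d)" by (auto simp: mem_box_cart)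
      then have "g d (x$d) = 0" by (simp add: g_def indicator_def)
      then show ?thesis using False by (auto intro!: prod_zero)
    qed
  qed
  have "((\<lambda>x. if x \<in> cbox lo hi then \<Prod>d\<in>UNIV. h d (x$d) else 0) has_integral (\<Prod>d\<in>UNIV. integral {lo$d..hi$d} (h d))) UNIV"
    using has_integral_integral_real[of "\<lambda>x::real^'n. \<Prod>d\<in>UNIV. g d (x $ d)"] P unfolding F g1 by simp
  then show ?thesis by (simp only: has_integral_restrict_UNIV)
qed


definition lo :: "nat \<Rightarrow> ('n::finite \<Rightarrow> nat) \<Rightarrow> real^'n" where
  "lo N i = (\<chi> d. real (i d) / real N)"
definition hi :: "nat \<Rightarrow> ('n::finite \<Rightarrow> nat) \<Rightarrow> real^'n" where
  "hi N i = (\<chi> d. (real (i d) + 1) / real N)"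

lemma cell_sub_box: "cell N i \<subseteq> cbox (lo N i) (hi N i)"
  by (auto simp: cell_def lo_def hi_def mem_box_cart less_imp_le)

lemma box_sub_cube: assumes "N \<ge> 1" "i \<in> cell_idx N"
  shows "cbox (lo N i) (hi N i) \<subseteq> unit_cube"
proof
  fix x assume x: "x \<in> cbox (lo N i) (hi N i)"
  show "x \<in> unit_cube" unfolding mem_box_cart
  proof
    fix d
    have id: "i d < N" using assms(2) by (simp add: cell_idx_def)
    have "real (i d) / real N \<le> x$d" "x$d \<le> (real (i d) + 1) / real N"
      using x by (auto simp: mem_box_cart lo_def hi_def)
    moreover have "0 \<le> real (i d) / real N" by simp
    moreover have "(real (i d) + 1) / real N \<le> 1" using id assms(1) by (simp add: field_simps)
    ultimately have "0 \<le> x$d" "x$d \<le> 1" by linarith+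
    then show "(0::real^'a)$d \<le> x$d \<and> x$d \<le> (1::real^'a)$d" by simp
  qed
qed

lemma cell_sub_cube: assumes "N \<ge> 1" "i \<in> cell_idx N"
  shows "cell N i \<subseteq> unit_cube"
  using cell_sub_box box_sub_cube[OF assms] by blast

lemma negligible_box_minus_cell:
  "negligible (\<Union>d\<in>UNIV. {x::real^'n::finite. x$d = (lo N i)$d})"
proof (rule negligible_Union)
  show "finite ((\<lambda>d. {x::real^'n. x$d = (lo N i)$d}) ` UNIV)" by simp
next
  fix T assume "T \<in> (\<lambda>d. {x::real^'n. x$d = (lo N i)$d}) ` UNIV"
  then obtain d where T: "T = {x::real^'n. x$d = (lo N i)$d}" by auto
  have "T = {x. axis d 1 \<bullet> x = (lo N i)$d}" unfolding T by (simp add: inner_axis')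
  moreover have "negligible {x::real^'n. axis d 1 \<bullet> x = (lo N i)$d}"
    by (rule negligible_hyperplane) (simp add: axis_eq_0_iff)
  ultimately show "negligible T" by simp
qed

lemma cell_has_integral:
  fixes h :: "real^'n::finite \<Rightarrow> real"
  assumes N: "N \<ge> 1" and i: "i \<in> cell_idx N"
    and hI: "(h has_integral J) (cbox (lo N i) (hi N i))"
  shows "((\<lambda>x. h x * indicator (cell N i) x) has_integral J) unit_cube"
proof -
  have "((\<lambda>x. h x * indicator (cell N i) x) has_integral J) (cbox (lo N i) (hi N i))"
  proof (rule has_integral_spike[OF negligible_box_minus_cell _ hI])
    fix x assume x: "x \<in> cbox (lo N i) (hi N i) - (\<Union>d\<in>UNIV. {x::real^'n. x$d = (lo N i)$d})"
    have "x \<in> cell N i"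
      using x by (auto simp: cell_def mem_box_cart lo_def hi_def less_le) (metis)
    then show "h x * indicator (cell N i) x = h x" by simp
  qed
  then have "((\<lambda>x. if x \<in> cbox (lo N i) (hi N i) then h x * indicator (cell N i) x else 0) has_integral J) UNIV"
    by (simp only: has_integral_restrict_UNIV)
  moreover have "(\<lambda>x. if x \<in> cbox (lo N i) (hi N i) then h x * indicator (cell N i) x else 0)
      = (\<lambda>x. if x \<in> unit_cube then h x * indicator (cell N i) x else 0)"
    using cell_sub_box[of N i] cell_sub_cube[OF N i] by (auto simp: indicator_def fun_eq_iff)
  ultimately show ?thesis by (simp only: has_integral_restrict_UNIV)
qed


lemma pleg_prod: "pleg N j i x = (\<Prod>d\<in>UNIV. phi N (i d) (j d) (x$d))"
  unfolding pleg_def phi_def by (simp add: prod.distrib mult.assoc)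

lemma continuous_on_phi[continuous_intros]:
  "continuous_on S f \<Longrightarrow> continuous_on S (\<lambda>x. phi N c j (f x))"
  unfolding phi_def by (intro continuous_intros continuous_on_legendre)

lemma continuous_on_pleg: "continuous_on S (pleg N j i)"
  unfolding pleg_prod[abs_def] by (intro continuous_intros)

lemma cells_disjoint:
  assumes N: "N \<ge> 1" and x: "x \<in> cell N i" "x \<in> cell N i'"
  shows "i = i'"
proof
  fix d
  have Np: "real N > 0" using N by simp
  have "real (i d) < real N * x$d" "real N * x$d \<le> real (i d) + 1"
       "real (i' d) < real N * x$d" "real N * x$d \<le> real (i' d) + 1"
    using x Np by (auto simp: cell_def field_simps)
  then have "real (i d) < real (i' d) + 1" "real (i' d) < real (i d) + 1" by linarith+
  then have "i d < i' d + 1" "i' d < i d + 1" by linarith+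
  then show "i d = i' d" by simp
qed

lemma eta_mult:
  assumes N: "N \<ge> 1"
  shows "eta N (i, j) x * eta N (i', k) x =
    (if i = i' then pleg N j i x * pleg N k i x * indicator (cell N i) x else 0)"
proof (cases "i = i'")
  case True
  then show ?thesis by (simp add: eta_def indicator_def)
next
  case False
  then have "\<not> (x \<in> cell N i \<and> x \<in> cell N i')" using cells_disjoint[OF N] by blast
  then show ?thesis using False by (auto simp: eta_def indicator_def)
qed

lemma eta_weighted_integrable:
  fixes h :: "real^'n::finite \<Rightarrow> real"
  assumes N: "N \<ge> 1" and a: "a \<in> basis_idx N Q" and b: "b \<in> basis_idx N Q"
    and h: "continuous_on unit_cube h"
  shows "(\<lambda>x. eta N a x * eta N b x * h x) integrable_on unit_cube"
proof -
  obtain i j i' k where ab: "a = (i, j)" "b = (i', k)" by (cases a, cases b) auto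
  have i: "i \<in> cell_idx N" using a ab by (simp add: basis_idx_def)
  show ?thesis
  proof (cases "i = i'")
    case True
    define H where "H x = pleg N j i x * pleg N k i x * h x" for x
    have "continuous_on unit_cube H" unfolding H_def
      by (intro continuous_intros continuous_on_pleg h)
    then have "continuous_on (cbox (lo N i) (hi N i)) H"
      by (rule continuous_on_subset) (rule box_sub_cube[OF N i])
    then have "(H has_integral integral (cbox (lo N i) (hi N i)) H) (cbox (lo N i) (hi N i))"
      by (intro integrable_integral integrable_continuous)
    from cell_has_integral[OF N i this]
    have "((\<lambda>x. H x * indicator (cell N i) x) has_integral integral (cbox (lo N i) (hi N i)) H) unit_cube" .
    moreover have "(\<lambda>x. eta N a x * eta N b x * h x) = (\<lambda>x. H x * indicator (cell N i) x)"
      using True by (auto simp: ab eta_mult[OF N] H_def fun_eq_iff)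
    ultimately show ?thesis by auto
  next
    case False
    have "(\<lambda>x. eta N a x * eta N b x * h x) = (\<lambda>x. 0)"
      using False by (auto simp: ab eta_mult[OF N] fun_eq_iff)
    then show ?thesis by (simp add: integrable_0)
  qed
qed

lemma eta_gram:
  fixes a b :: "('n::finite \<Rightarrow> nat) \<times> ('n \<Rightarrow> nat)"
  assumes N: "N \<ge> 1" and a: "a \<in> basis_idx N Q" and b: "b \<in> basis_idx N Q"
  shows "integral unit_cube (\<lambda>x::real^'n. eta N a x * eta N b x) = (if a = b then 1 else 0)"
proof -
  obtain i j i' k where ab: "a = (i, j)" "b = (i', k)" by (cases a, cases b) auto
  have i: "i \<in> cell_idx N" using a ab by (simp add: basis_idx_def)
  show ?thesis
  proof (cases "i = i'")
    case True
    define H where "H x = pleg N j i x * pleg N k i x" for x :: "real^'n"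
    have H: "H = (\<lambda>x. \<Prod>d\<in>UNIV. phi N (i d) (j d) (x$d) * phi N (i d) (k d) (x$d))"
      unfolding H_def pleg_prod by (simp add: prod.distrib fun_eq_iff)
    have "(H has_integral (\<Prod>d\<in>UNIV. integral {(lo N i)$d..(hi N i)$d} (\<lambda>y. phi N (i d) (j d) y * phi N (i d) (k d) y))) (cbox (lo N i) (hi N i))"
      unfolding H by (rule box_prod_has_integral) (intro continuous_intros continuous_on_id)
    moreover have "integral {(lo N i)$d..(hi N i)$d} (\<lambda>y. phi N (i d) (j d) y * phi N (i d) (k d) y) = (if j d = k d then 1 else 0)" for d
      using phi_orth[OF N, of "i d" "j d" "k d"] by (simp add: lo_def hi_def integral_unique)
    moreover have "(\<Prod>d\<in>UNIV. (if j d = k d then 1 else 0 :: real)) = (if j = k then 1 else 0)"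
    proof (cases "j = k")
      case True then show ?thesis by simp
    next
      case False
      then obtain d where "j d \<noteq> k d" by auto
      then show ?thesis using False by (auto intro!: prod_zero)
    qed
    ultimately have "(H has_integral (if j = k then 1 else 0)) (cbox (lo N i) (hi N i))" by simp
    from cell_has_integral[OF N i this]
    have "((\<lambda>x. H x * indicator (cell N i) x) has_integral (if j = k then 1 else 0)) unit_cube" .
    moreover have "(\<lambda>x. eta N a x * eta N b x) = (\<lambda>x. H x * indicator (cell N i) x)"
      using True by (auto simp: ab eta_mult[OF N] H_def fun_eq_iff)
    ultimately show ?thesis using True ab by (auto intro: integral_unique)
  next
    case False
    have "(\<lambda>x. eta N a x * eta N b x) = (\<lambda>x. 0)"
      using False by (auto simp: ab eta_mult[OF N] fun_eq_iff)
    then show ?thesis using False ab by simp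
  qed
qed


lemma finite_cell_idx: "finite (cell_idx N :: ('n::finite \<Rightarrow> nat) set)"
proof -
  have "cell_idx N = (PiE UNIV (\<lambda>_::'n. {..<N}))"
    by (auto simp: cell_idx_def PiE_def extensional_def)
  then show ?thesis by (simp add: finite_PiE)
qed

lemma finite_deg_idx: "finite (deg_idx Q :: ('n::finite \<Rightarrow> nat) set)"
proof -
  have "deg_idx Q \<subseteq> (PiE UNIV (\<lambda>_::'n. {..Q}))"
  proof
    fix j :: "'n \<Rightarrow> nat" assume j: "j \<in> deg_idx Q"
    have "j d \<le> Q" for d
      using j member_le_sum[of d UNIV j] by (auto simp: deg_idx_def)
    then show "j \<in> PiE UNIV (\<lambda>_. {..Q})" by (auto simp: PiE_def extensional_def)
  qed
  then show ?thesis by (rule finite_subset) (simp add: finite_PiE)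
qed

lemma card_deg_idx: "card (deg_idx Q :: ('n::finite \<Rightarrow> nat) set) \<le> (CARD('n) + Q choose CARD('n))"
proof -
  define phi where "phi M = (\<lambda>d::'n. count M (Some d))" for M :: "'n option multiset"
  have sub: "deg_idx Q \<subseteq> phi ` multisets_of_size (UNIV :: 'n option set) Q"
  proof
    fix j :: "'n \<Rightarrow> nat" assume j: "j \<in> deg_idx Q"
    define M where "M = (\<Sum>d\<in>UNIV. replicate_mset (j d) (Some d)) + replicate_mset (Q - (\<Sum>d\<in>UNIV. j d)) None"
    have "phi M = j"
    proof
      fix d
      have "count M (Some d) = (\<Sum>d'\<in>UNIV. count (replicate_mset (j d') (Some d')) (Some d))"
        by (simp add: M_def count_sum)
      also have "\<dots> = (\<Sum>d'\<in>UNIV. if d' = d then j d' else 0)"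
        by (intro sum.cong) auto
      also have "\<dots> = j d" by simp
      finally show "phi M d = j d" by (simp add: phi_def)
    qed
    moreover have "size M = Q"
      using j by (simp add: M_def deg_idx_def)
    ultimately show "j \<in> phi ` multisets_of_size UNIV Q"
      by (auto simp: multisets_of_size_def)
  qed
  have "card (deg_idx Q :: ('n \<Rightarrow> nat) set) \<le> card (phi ` multisets_of_size (UNIV :: 'n option set) Q)"
    by (rule card_mono[OF finite_imageI[OF finite_multisets_of_size] sub]) simp
  also have "\<dots> \<le> card (multisets_of_size (UNIV :: 'n option set) Q)"
    by (rule card_image_le) (rule finite_multisets_of_size, simp)
  also have "\<dots> = CARD('n option) + Q - 1 choose Q" by (simp add: card_multisets_of_size)
  also have "\<dots> = (CARD('n) + Q choose Q)" by simp
  also have "\<dots> = (CARD('n) + Q choose CARD('n))"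
    using binomial_symmetric[of Q "CARD('n) + Q"] by simp
  finally show ?thesis .
qed


lemma phi_sq_bound:
  assumes N: "N \<ge> 1" and y: "real c / real N < y" "y \<le> (real c + 1) / real N"
  shows "(phi N c j y)^2 \<le> real N * exp (2 * real j)"
proof -
  have Np: "real N > 0" using N by simp
  define s where "s = 2 * (real N * y - real c) - 1"
  have "real c < real N * y" "real N * y \<le> real c + 1" using y Np by (auto simp: field_simps)
  then have "\<bar>s\<bar> \<le> 1" unfolding s_def by (simp add: abs_le_iff algebra_simps)
  then have L: "(legendre j s)^2 \<le> 1" using lp_bound[of s j] by (simp add: poly_lp)
  have "(phi N c j y)^2 = real N * (2 * real j + 1) * (legendre j s)^2"
    unfolding phi_def s_def by (simp add: power_mult_distrib)
  also have "\<dots> \<le> real N * (2 * real j + 1) * 1"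
    by (intro mult_left_mono L) auto
  also have "\<dots> = real N * (1 + 2 * real j)" by simp
  also have "\<dots> \<le> real N * exp (2 * real j)"
    using exp_ge_add_one_self[of "2 * real j"] by (intro mult_left_mono) auto
  finally show ?thesis .
qed

lemma pleg_sq_bound:
  fixes x :: "real^'n::finite"
  assumes N: "N \<ge> 1" and x: "x \<in> cell N i" and j: "j \<in> deg_idx Q"
  shows "(pleg N j i x)^2 \<le> real N ^ CARD('n) * exp (2 * real Q)"
proof -
  have "(pleg N j i x)^2 = (\<Prod>d\<in>UNIV. (phi N (i d) (j d) (x$d))^2)"
    unfolding pleg_prod by (simp add: prod_power_distrib)
  also have "\<dots> \<le> (\<Prod>d\<in>UNIV. real N * exp (2 * real (j d)))"
    using x by (intro prod_mono) (auto simp: cell_def intro!: phi_sq_bound[OF N])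
  also have "\<dots> = real N ^ CARD('n) * exp (2 * real (\<Sum>d\<in>UNIV. j d))"
    by (simp add: prod.distrib exp_sum sum_distrib_left)
  also have "\<dots> \<le> real N ^ CARD('n) * exp (2 * real Q)"
    using j by (intro mult_left_mono) (auto simp: deg_idx_def simp flip: of_nat_sum)
  finally show ?thesis .
qed

lemma indicator_sum_le_1:
  fixes x :: "real^'n::finite"
  assumes N: "N \<ge> 1"
  shows "(\<Sum>i\<in>cell_idx N. indicator (cell N i) x) \<le> (1::real)"
proof (cases "\<exists>i0\<in>cell_idx N. x \<in> cell N i0")
  case True
  then obtain i0 where i0: "i0 \<in> cell_idx N" "x \<in> cell N i0" by blast
  have "(\<Sum>i\<in>cell_idx N. indicator (cell N i) x) = (\<Sum>i\<in>cell_idx N. if i = i0 then 1 else (0::real))"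
  proof (rule sum.cong[OF refl])
    fix i :: "'n \<Rightarrow> nat" assume "i \<in> cell_idx N"
    show "indicator (cell N i) x = (if i = i0 then 1 else (0::real))"
    proof (cases "i = i0")
      case True then show ?thesis using i0 by simp
    next
      case False
      then have "x \<notin> cell N i" using cells_disjoint[OF N _ i0(2)] by blast
      then show ?thesis using False by simp
    qed
  qed
  also have "\<dots> = 1" by (subst sum.delta[OF finite_cell_idx]) (simp add: i0)
  finally show ?thesis by simp
next
  case False
  then have "(\<Sum>i\<in>cell_idx N. indicator (cell N i) x) = (0::real)"
    by (intro sum.neutral) auto
  then show ?thesis by simp
qed

lemma sup_part:
  fixes x :: "real^'n::finite"
  assumes N: "N \<ge> 1"
  shows "(\<Sum>a\<in>basis_idx N Q. (eta N a x)\<^sup>2)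
         \<le> real N ^ CARD('n) * exp (2 * real Q) * real (CARD('n) + Q choose CARD('n))"
proof -
  define K where "K = real N ^ CARD('n) * exp (2 * real Q) * real (CARD('n) + Q choose CARD('n))"
  have K0: "K \<ge> 0" unfolding K_def by simp
  have "(\<Sum>a\<in>basis_idx N Q. (eta N a x)\<^sup>2) = (\<Sum>i\<in>cell_idx N. \<Sum>j\<in>deg_idx Q. (eta N (i, j) x)\<^sup>2)"
    unfolding basis_idx_def by (simp add: sum.cartesian_product)
  also have "\<dots> = (\<Sum>i\<in>cell_idx N. indicator (cell N i) x * (\<Sum>j\<in>deg_idx Q. (pleg N j i x)\<^sup>2))"
    by (intro sum.cong refl) (auto simp: eta_def indicator_def sum_distrib_left power2_eq_square)
  also have "\<dots> \<le> (\<Sum>i\<in>cell_idx N. indicator (cell N i) x * K)"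
  proof (intro sum_mono)
    fix i :: "'n \<Rightarrow> nat" assume i: "i \<in> cell_idx N"
    show "indicator (cell N i) x * (\<Sum>j\<in>deg_idx Q. (pleg N j i x)\<^sup>2) \<le> indicator (cell N i) x * K"
    proof (cases "x \<in> cell N i")
      case True
      have "(\<Sum>j\<in>deg_idx Q. (pleg N j i x)\<^sup>2) \<le> real (card (deg_idx Q :: ('n \<Rightarrow> nat) set)) * (real N ^ CARD('n) * exp (2 * real Q))"
        by (rule sum_bounded_above) (rule pleg_sq_bound[OF N True])
      also have "\<dots> \<le> real (CARD('n) + Q choose CARD('n)) * (real N ^ CARD('n) * exp (2 * real Q))"
        using card_deg_idx[where 'n='n, of Q] by (intro mult_right_mono) auto
      finally show ?thesis using True by (simp add: K_def mult_ac)
    next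
      case False
      then show ?thesis by simp
    qed
  qed
  also have "\<dots> = (\<Sum>i\<in>cell_idx N. indicator (cell N i) x) * K"
    by (simp add: sum_distrib_right)
  also have "\<dots> \<le> 1 * K"
    by (intro mult_right_mono indicator_sum_le_1[OF N] K0)
  finally show ?thesis by (simp add: K_def)
qed


lemma finite_basis_idx: "finite (basis_idx N Q :: (('n::finite \<Rightarrow> nat) \<times> ('n \<Rightarrow> nat)) set)"
  unfolding basis_idx_def using finite_cell_idx finite_deg_idx by blast

lemma quad_form:
  fixes h :: "real^'n::finite \<Rightarrow> real" and v :: "('n \<Rightarrow> nat) \<times> ('n \<Rightarrow> nat) \<Rightarrow> real"
  assumes N: "N \<ge> 1" and h: "continuous_on unit_cube h"
  shows "((\<lambda>x. (\<Sum>a\<in>basis_idx N Q. v a * eta N a x)^2 * h x) has_integral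
     (\<Sum>a\<in>basis_idx N Q. \<Sum>b\<in>basis_idx N Q. v a * v b * integral unit_cube (\<lambda>x. eta N a x * eta N b x * h x))) unit_cube"
proof -
  let ?B = "basis_idx N Q :: (('n \<Rightarrow> nat) \<times> ('n \<Rightarrow> nat)) set"
  have e: "(\<lambda>x. (\<Sum>a\<in>?B. v a * eta N a x)^2 * h x) = (\<lambda>x. \<Sum>a\<in>?B. \<Sum>b\<in>?B. v a * v b * (eta N a x * eta N b x * h x))"
  proof (rule ext)
    fix x
    show "(\<Sum>a\<in>?B. v a * eta N a x)^2 * h x = (\<Sum>a\<in>?B. \<Sum>b\<in>?B. v a * v b * (eta N a x * eta N b x * h x))"
      unfolding power2_eq_square sum_distrib_left sum_distrib_right by (intro sum.cong refl) (simp add: mult_ac)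
  qed
  have "((\<lambda>x. \<Sum>a\<in>?B. \<Sum>b\<in>?B. v a * v b * (eta N a x * eta N b x * h x)) has_integral
     (\<Sum>a\<in>?B. \<Sum>b\<in>?B. v a * v b * integral unit_cube (\<lambda>x. eta N a x * eta N b x * h x))) unit_cube"
  proof (intro has_integral_sum finite_basis_idx)
    fix a b assume a: "a \<in> ?B" and b: "b \<in> ?B"
    show "((\<lambda>x. v a * v b * (eta N a x * eta N b x * h x)) has_integral
        v a * v b * integral unit_cube (\<lambda>x. eta N a x * eta N b x * h x)) unit_cube"
      by (intro has_integral_mult_right integrable_integral eta_weighted_integrable[OF N a b h])
  qed
  then show ?thesis unfolding e .
qed


theorem mainTheorem6:
  fixes f :: "real^'n::finite \<Rightarrow> real" and N Q :: nat
  assumes N: "N \<ge> 1"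
    and cont: "continuous_on unit_cube f"
    and pos: "\<forall>x\<in>unit_cube. f x > 0"
    and dens: "integral unit_cube f = 1"
    and cond: "Q = 0 \<or> modcont f (1 / real N) = 0 \<or>
       2 * real (CARD('n) + Q choose CARD('n)) * exp (2 * real Q)
         \<le> Inf (f ` unit_cube) / modcont f (1 / real N)"
  shows "(\<forall>lam \<in> eigenvalues_on (basis_idx N Q)
            (\<lambda>a b. integral unit_cube (\<lambda>x. eta N a x * eta N b x * f x)).
            Inf (f ` unit_cube) / 2 \<le> lam \<and> lam \<le> 3 / 2 * Sup (f ` unit_cube))
    \<and> (SUP (x::real^'n)\<in>unit_cube. \<Sum>a\<in>basis_idx N Q. (eta N a x)\<^sup>2)
         \<le> real N ^ CARD('n) * exp (2 * real Q) * real (CARD('n) + Q choose CARD('n))"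
proof
  have zc: "(0::real^'n) \<in> unit_cube" by (auto simp: mem_box_cart)
  then have ne: "(unit_cube :: (real^'n) set) \<noteq> {}" by blast
  have cmp: "compact (f ` unit_cube)" by (rule compact_continuous_image[OF cont compact_cbox])
  then have bd: "bounded (f ` unit_cube)" by (rule compact_imp_bounded)
  have fl: "Inf (f ` unit_cube) \<le> f x" if "x \<in> unit_cube" for x
    by (rule cInf_lower[OF imageI[OF that] bounded_imp_bdd_below[OF bd]])
  have fu: "f x \<le> Sup (f ` unit_cube)" if "x \<in> unit_cube" for x
    by (rule cSup_upper[OF imageI[OF that] bounded_imp_bdd_above[OF bd]])
  have inf0: "0 \<le> Inf (f ` unit_cube)"
    using ne pos by (intro cInf_greatest) (auto intro: less_imp_le)
  have sup0: "0 \<le> Sup (f ` unit_cube)"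
    using fu[OF zc] pos zc by force
  let ?B = "basis_idx N Q :: (('n \<Rightarrow> nat) \<times> ('n \<Rightarrow> nat)) set"
  show "\<forall>lam \<in> eigenvalues_on ?B (\<lambda>a b. integral unit_cube (\<lambda>x. eta N a x * eta N b x * f x)).
            Inf (f ` unit_cube) / 2 \<le> lam \<and> lam \<le> 3 / 2 * Sup (f ` unit_cube)"
  proof
    fix lam assume "lam \<in> eigenvalues_on ?B (\<lambda>a b. integral unit_cube (\<lambda>x. eta N a x * eta N b x * f x))"
    then obtain v a0 where a0: "a0 \<in> ?B" "v a0 \<noteq> 0"
      and eig: "\<And>a. a \<in> ?B \<Longrightarrow> (\<Sum>b\<in>?B. integral unit_cube (\<lambda>x. eta N a x * eta N b x * f x) * v b) = lam * v a"
      unfolding eigenvalues_on_def by blast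
    define S2 where "S2 = (\<Sum>a\<in>?B. v a * v a)"
    have S2pos: "S2 > 0"
    proof -
      have "v a0 * v a0 \<le> S2" unfolding S2_def
        by (rule member_le_sum[OF a0(1)]) (auto simp: finite_basis_idx)
      moreover have "v a0 * v a0 > 0" using a0(2) by (metis not_real_square_gt_zero)
      ultimately show ?thesis by linarith
    qed
    define g where "g x = (\<Sum>a\<in>?B. v a * eta N a x)" for x
    have Qf: "((\<lambda>x. (g x)^2 * f x) has_integral lam * S2) unit_cube"
    proof -
      have "(\<Sum>a\<in>?B. \<Sum>b\<in>?B. v a * v b * integral unit_cube (\<lambda>x. eta N a x * eta N b x * f x))
          = (\<Sum>a\<in>?B. v a * (\<Sum>b\<in>?B. integral unit_cube (\<lambda>x. eta N a x * eta N b x * f x) * v b))"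
        by (simp add: sum_distrib_left mult_ac)
      also have "\<dots> = (\<Sum>a\<in>?B. v a * (lam * v a))" by (intro sum.cong refl) (simp add: eig)
      also have "\<dots> = lam * S2" by (simp add: S2_def sum_distrib_left mult_ac)
      finally show ?thesis using quad_form[OF N cont, where Q=Q and v=v] unfolding g_def by simp
    qed
    have Q1: "((\<lambda>x. (g x)^2 * 1) has_integral S2) unit_cube"
    proof -
      have c1: "continuous_on unit_cube (\<lambda>x::real^'n. 1::real)" by simp
      have "(\<Sum>a\<in>?B. \<Sum>b\<in>?B. v a * v b * integral unit_cube (\<lambda>x. eta N a x * eta N b x * 1))
          = (\<Sum>a\<in>?B. \<Sum>b\<in>?B. v a * v b * (if a = b then 1 else 0))"
        by (intro sum.cong refl) (simp add: eta_gram[OF N])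
      also have "\<dots> = S2" by (simp add: S2_def finite_basis_idx if_distrib cong: if_cong)
      finally show ?thesis using quad_form[OF N c1, where Q=Q and v=v] unfolding g_def by simp
    qed
    have low: "Inf (f ` unit_cube) * S2 \<le> lam * S2"
    proof (rule has_integral_le[OF has_integral_mult_right[OF Q1] Qf])
      fix x :: "real^'n" assume xc: "x \<in> unit_cube"
      have "Inf (f ` unit_cube) * (g x)^2 \<le> f x * (g x)^2"
        by (rule mult_right_mono[OF fl[OF xc]]) simp
      then show "Inf (f ` unit_cube) * ((g x)^2 * 1) \<le> (g x)^2 * f x"
        by (simp add: mult.commute)
    qed
    have up: "lam * S2 \<le> Sup (f ` unit_cube) * S2"
    proof (rule has_integral_le[OF Qf has_integral_mult_right[OF Q1]])
      fix x :: "real^'n" assume xc: "x \<in> unit_cube"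
      have "f x * (g x)^2 \<le> Sup (f ` unit_cube) * (g x)^2"
        by (rule mult_right_mono[OF fu[OF xc]]) simp
      then show "(g x)^2 * f x \<le> Sup (f ` unit_cube) * ((g x)^2 * 1)"
        by (simp add: mult.commute)
    qed
    have "Inf (f ` unit_cube) \<le> lam" using low S2pos by simp
    moreover have "lam \<le> Sup (f ` unit_cube)" using up S2pos by simp
    ultimately show "Inf (f ` unit_cube) / 2 \<le> lam \<and> lam \<le> 3 / 2 * Sup (f ` unit_cube)"
      using inf0 sup0 by linarith
  qed
next
  show "(SUP (x::real^'n)\<in>unit_cube. \<Sum>a\<in>basis_idx N Q. (eta N a x)\<^sup>2)
         \<le> real N ^ CARD('n) * exp (2 * real Q) * real (CARD('n) + Q choose CARD('n))"
  proof (rule cSUP_least)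
    have "(0::real^'n) \<in> unit_cube" by (auto simp: mem_box_cart)
    then show "(unit_cube :: (real^'n) set) \<noteq> {}" by blast
  qed (rule sup_part[OF N])
qed


end
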